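(* Let $P$ be a simplicial polytope of dimension $d\ge3$. Then $\dim\mathrm{InCone}(P)\le1$.
   Context: $\mathrm{InCone}(P)$ is the set of polytopes with all vertices on a common sphere and with the same normal fan as $P$, modulo translation; it is a polyhedral cone (identified with the set of such polytopes whose inscribing sphere is centered at the origin). *)

theory Defs
  imports "HOL-Analysis.Analysis"
begin

definition normal_cone :: "'a::euclidean_space set \<Rightarrow> 'a set \<Rightarrow> 'a set" where
  "normal_cone P F = {c. \<forall>x\<in>F. \<forall>y\<in>P. c \<bullet> y \<le> c \<bullet> x}"

definition normal_fan :: "'a::euclidean_space set \<Rightarrow> 'a set set" where
  "normal_fan P = {normal_cone P F | F. F face_of P \<and> F \<noteq> {}}"

definition simplicial_polytope :: "'a::euclidean_space set \<Rightarrow> bool" where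
  "simplicial_polytope P \<longleftrightarrow> polytope P \<and>
     (\<forall>F. F facet_of P \<longrightarrow> (\<exists>n. n simplex F))"

definition inscribed_origin :: "'a::euclidean_space set \<Rightarrow> bool" where
  "inscribed_origin Q \<longleftrightarrow> (\<exists>r. \<forall>v. v extreme_point_of Q \<longrightarrow> norm v = r)"

text \<open>InCone(P), identified with the inscribed polytopes with the same normal fan
  whose circumsphere is centered at the origin.\<close>
definition InCone :: "'a::euclidean_space set \<Rightarrow> 'a set set" where
  "InCone P = {Q. polytope Q \<and> normal_fan Q = normal_fan P \<and> inscribed_origin Q}"

text \<open>Support function; polytopes with a fixed normal fan form a cone in the
  space of support functions (Minkowski addition = addition of support functions).\<close>
definition support_fun :: "'a::euclidean_space set \<Rightarrow> 'a \<Rightarrow> real" where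
  "support_fun Q = (\<lambda>u. SUP x\<in>Q. u \<bullet> x)"

definition span_dim_le_one :: "('a \<Rightarrow> real) set \<Rightarrow> bool" where
  "span_dim_le_one S \<longleftrightarrow> (\<exists>g. \<forall>f\<in>S. \<exists>t::real. f = (\<lambda>u. t * g u))"

end

theory Submission
  imports Defs
begin

lemma nc_sing: "c \<in> normal_cone S {x} \<longleftrightarrow> (\<forall>y\<in>S. c \<bullet> y \<le> c \<bullet> x)"
  by (simp add: normal_cone_def)

lemma perturb:
  fixes V :: "'a::euclidean_space set"
  assumes fin: "finite V" and xW: "x \<in> W" and WV: "W \<subseteq> V"
    and eqW: "\<forall>w\<in>W. c \<bullet> w = c \<bullet> x" and lt: "\<forall>v\<in>V-W. c \<bullet> v < c \<bullet> x"
  shows "\<exists>e>0. \<forall>z. norm z < e \<longrightarrow> (\<forall>w\<in>W. z \<bullet> w = z \<bullet> x) \<longrightarrow> c + z \<in> normal_cone (convex hull V) {x}"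
proof -
  define f where "f v = (c \<bullet> x - c \<bullet> v) / norm (x - v)" for v
  define e where "e = Min (insert 1 (f ` (V - W)))"
  have fpos: "f v > 0" if "v \<in> V - W" for v
  proof -
    have "v \<noteq> x" using that xW by auto
    then show ?thesis using lt that by (simp add: f_def)
  qed
  have epos: "e > 0" unfolding e_def using fin fpos by (subst Min_gr_iff) auto
  have ele: "e \<le> f v" if "v \<in> V - W" for v
    unfolding e_def using fin that by (intro Min_le) auto
  show ?thesis
  proof (intro exI conjI allI impI)
    show "e > 0" by (rule epos)
    fix z :: 'a assume nz: "norm z < e" and zW: "\<forall>w\<in>W. z \<bullet> w = z \<bullet> x"
    have allV: "(c + z) \<bullet> v \<le> (c + z) \<bullet> x" if "v \<in> V" for v
    proof (cases "v \<in> W")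
      case True then show ?thesis using eqW zW by (simp add: inner_add_left)
    next
      case False
      then have vW: "v \<in> V - W" using that by auto
      have "v \<noteq> x" using False xW by auto
      then have nxv: "norm (x - v) > 0" by simp
      have "norm z < f v" using nz ele[OF vW] by simp
      then have "norm z * norm (x - v) < c \<bullet> x - c \<bullet> v"
        using nxv by (simp add: f_def pos_less_divide_eq)
      moreover have "z \<bullet> (v - x) \<le> norm z * norm (x - v)"
        using norm_cauchy_schwarz[of z "v - x"] by (simp add: norm_minus_commute)
      ultimately show ?thesis by (simp add: inner_add_left inner_diff_right)
    qed
    have "convex hull V \<subseteq> {y. (c + z) \<bullet> y \<le> (c + z) \<bullet> x}"
      by (rule hull_minimal) (use allV convex_halfspace_le in auto)
    then show "c + z \<in> normal_cone (convex hull V) {x}"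
      by (auto simp: normal_cone_def)
  qed
qed

lemma singleton_of_ball:
  fixes d :: "'a::euclidean_space"
  assumes e: "e > 0" and ball: "\<forall>z. norm z < e \<longrightarrow> d + z \<in> normal_cone S E"
    and ES: "E \<subseteq> S" and a: "a \<in> E" and b: "b \<in> E"
  shows "a = b"
proof (rule ccontr)
  assume ab: "a \<noteq> b"
  have eq: "(d + z) \<bullet> a = (d + z) \<bullet> b" if "norm z < e" for z
  proof -
    have "d + z \<in> normal_cone S E" using ball that by auto
    then have h: "\<forall>x\<in>E. \<forall>y\<in>S. (d + z) \<bullet> y \<le> (d + z) \<bullet> x" by (simp add: normal_cone_def)
    have "(d + z) \<bullet> b \<le> (d + z) \<bullet> a" using h a b ES by blast
    moreover have "(d + z) \<bullet> a \<le> (d + z) \<bullet> b" using h a b ES by blast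
    ultimately show ?thesis by simp
  qed
  have e0: "d \<bullet> a = d \<bullet> b" using eq[of 0] e by simp
  define z where "z = (e / 2 / norm (a - b)) *\<^sub>R (a - b)"
  have nab: "norm (a - b) > 0" using ab by simp
  have "norm z = e / 2" using nab e by (simp add: z_def)
  then have "norm z < e" using e by simp
  then have "z \<bullet> (a - b) = 0" using eq e0 by (simp add: inner_add_left inner_diff_right)
  moreover have "z \<bullet> (a - b) = e / 2 * norm (a - b)"
    using nab by (simp add: z_def inner_commute power2_norm_eq_inner[symmetric] power2_eq_square)
  ultimately show False using e nab by simp
qed

lemma parallel_lemma:
  fixes u w :: "'a::euclidean_space"
  assumes e: "e > 0" and u: "u \<noteq> 0"
    and H: "\<forall>z. norm z < e \<longrightarrow> z \<bullet> u = 0 \<longrightarrow> z \<bullet> w = 0"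
  shows "\<exists>m. w = m *\<^sub>R u"
proof -
  define z0 where "z0 = w - ((w \<bullet> u) / (u \<bullet> u)) *\<^sub>R u"
  have uu: "u \<bullet> u \<noteq> 0" using u by simp
  have z0u: "z0 \<bullet> u = 0" using uu by (simp add: z0_def inner_diff_left)
  define t where "t = e / (2 * (norm z0 + 1))"
  have tp: "2 * (norm z0 + 1) > 0" by (smt (verit) norm_ge_zero)
  then have t: "t > 0" using e unfolding t_def by (rule divide_pos_pos[rotated])
  have "norm (t *\<^sub>R z0) = t * norm z0" using t by simp
  also have "\<dots> < e"
  proof -
    have "t * norm z0 \<le> t * (norm z0 + 1)" using t by simp
    also have "\<dots> = e / 2" unfolding t_def using tp by (simp add: field_simps)
    finally show ?thesis using e by simp
  qed
  finally have nt: "norm (t *\<^sub>R z0) < e" .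
  have "(t *\<^sub>R z0) \<bullet> u = 0" using z0u by simp
  then have "(t *\<^sub>R z0) \<bullet> w = 0" using H nt by blast
  then have z0w: "z0 \<bullet> w = 0" using t by simp
  have "z0 \<bullet> z0 = z0 \<bullet> w - ((w \<bullet> u) / (u \<bullet> u)) * (z0 \<bullet> u)"
    by (simp add: z0_def inner_diff_right)
  then have "z0 \<bullet> z0 = 0" using z0w z0u by simp
  then have "z0 = 0" by simp
  then show ?thesis unfolding z0_def by (intro exI[of _ "(w \<bullet> u) / (u \<bullet> u)"]) simp
qed

lemma ext_in: "x extreme_point_of S \<Longrightarrow> x \<in> S"
  by (simp add: extreme_point_of_def)

lemma polytope_ext:
  fixes S :: "'a::euclidean_space set"
  assumes "polytope S"
  shows "finite {v. v extreme_point_of S} \<and> S = convex hull {v. v extreme_point_of S}"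
proof -
  obtain V where V: "finite V" "S = convex hull V" using assms unfolding polytope_def by blast
  show ?thesis
    using finite_polyhedron_extreme_points[OF polytope_imp_polyhedron[OF assms]]
      Krein_Milman_polytope[OF V(1)] V(2) by simp
qed

lemma exposed_vertex:
  fixes S :: "'a::euclidean_space set"
  assumes "polytope S" "x extreme_point_of S"
  shows "\<exists>d. \<forall>y\<in>S. y \<noteq> x \<longrightarrow> d \<bullet> y < d \<bullet> x"
proof -
  have "{x} face_of S" using assms(2) face_of_singleton by blast
  then have "{x} exposed_face_of S"
    using exposed_face_of_polyhedron[OF polytope_imp_polyhedron[OF assms(1)]] by blast
  then obtain a b where ab: "S \<subseteq> {y. a \<bullet> y \<le> b}" "{x} = S \<inter> {y. a \<bullet> y = b}"
    unfolding exposed_face_of_def by blast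
  have "a \<bullet> x = b" using ab(2) by blast
  moreover have "a \<bullet> y < b" if "y \<in> S" "y \<noteq> x" for y
  proof -
    have "a \<bullet> y \<le> b" using ab(1) that by blast
    moreover have "a \<bullet> y \<noteq> b" using ab(2) that by blast
    ultimately show ?thesis by simp
  qed
  ultimately show ?thesis by auto
qed

lemma cone_ball:
  fixes S :: "'a::euclidean_space set"
  assumes S: "polytope S" and x: "x extreme_point_of S"
  shows "\<exists>d e. e > 0 \<and> (\<forall>z. norm z < e \<longrightarrow> d + z \<in> normal_cone S {x})
            \<and> (\<forall>y\<in>S. y \<noteq> x \<longrightarrow> d \<bullet> y < d \<bullet> x)"
proof -
  obtain d where d: "\<forall>y\<in>S. y \<noteq> x \<longrightarrow> d \<bullet> y < d \<bullet> x" using exposed_vertex[OF S x] by blast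
  let ?V = "{v. v extreme_point_of S}"
  have V: "finite ?V" "S = convex hull ?V" using polytope_ext[OF S] by auto
  have xV: "x \<in> ?V" using x by simp
  have "\<forall>v\<in>?V-{x}. d \<bullet> v < d \<bullet> x" using d ext_in by blast
  then obtain e where e: "e > 0" "\<forall>z. norm z < e \<longrightarrow> (\<forall>w\<in>{x}. z \<bullet> w = z \<bullet> x) \<longrightarrow> d + z \<in> normal_cone (convex hull ?V) {x}"
    using perturb[OF V(1), of x "{x}" d] xV by auto
  show ?thesis using e d V(2)[symmetric] by (intro exI[of _ d] exI[of _ e]) auto
qed

lemma cone_unique:
  fixes Q :: "'a::euclidean_space set"
  assumes Q: "polytope Q" and q: "q extreme_point_of Q" and q': "q' extreme_point_of Q"
    and eq: "normal_cone Q {q} = normal_cone Q {q'}"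
  shows "q = q'"
proof (rule ccontr)
  assume ne: "q \<noteq> q'"
  obtain d where d: "\<forall>y\<in>Q. y \<noteq> q \<longrightarrow> d \<bullet> y < d \<bullet> q" using exposed_vertex[OF Q q] by blast
  have "d \<in> normal_cone Q {q}" using d by (force simp: normal_cone_def)
  then have "d \<in> normal_cone Q {q'}" using eq by simp
  then have "d \<bullet> q \<le> d \<bullet> q'" using ext_in[OF q] by (auto simp: normal_cone_def)
  moreover have "d \<bullet> q' < d \<bullet> q" using d ext_in[OF q'] ne by auto
  ultimately show False by simp
qed

lemma sigma_exists:
  fixes P Q :: "'a::euclidean_space set"
  assumes P: "polytope P" and Q: "polytope Q" and fan: "normal_fan Q = normal_fan P"
    and x: "x extreme_point_of P"
  shows "\<exists>q. q extreme_point_of Q \<and> normal_cone Q {q} = normal_cone P {x}"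
proof -
  have xf: "{x} face_of P" using x face_of_singleton by blast
  have "normal_cone P {x} \<in> normal_fan P" unfolding normal_fan_def using xf by blast
  then have "normal_cone P {x} \<in> normal_fan Q" using fan by simp
  then obtain E where E: "E face_of Q" "E \<noteq> {}" "normal_cone Q E = normal_cone P {x}"
    unfolding normal_fan_def by blast
  obtain d e where de: "e > 0" "\<forall>z. norm z < e \<longrightarrow> d + z \<in> normal_cone P {x}"
    using cone_ball[OF P x] by blast
  have ball: "\<forall>z. norm z < e \<longrightarrow> d + z \<in> normal_cone Q E" using de(2) E(3) by simp
  have ES: "E \<subseteq> Q" using E(1) face_of_imp_subset by blast
  obtain q where qE: "q \<in> E" using E(2) by blast
  have "b = q" if "b \<in> E" for b
    using singleton_of_ball[OF de(1) ball ES that qE] .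
  then have Eq: "E = {q}" using qE by blast
  then have "{q} face_of Q" using E(1) by simp
  then have "q extreme_point_of Q" using face_of_singleton[of q Q] by blast
  then show ?thesis using E(3) Eq by blast
qed

definition sig :: "'a::euclidean_space set \<Rightarrow> 'a set \<Rightarrow> 'a \<Rightarrow> 'a" where
  "sig P Q x = (SOME q. q extreme_point_of Q \<and> normal_cone Q {q} = normal_cone P {x})"

lemma sig:
  fixes P Q :: "'a::euclidean_space set"
  assumes P: "polytope P" and Q: "polytope Q" and fan: "normal_fan Q = normal_fan P"
    and x: "x extreme_point_of P"
  shows "sig P Q x extreme_point_of Q \<and> normal_cone Q {sig P Q x} = normal_cone P {x}"
  unfolding sig_def by (rule someI_ex) (rule sigma_exists[OF P Q fan x])

lemma sig_surj:
  fixes P Q :: "'a::euclidean_space set"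
  assumes P: "polytope P" and Q: "polytope Q" and fan: "normal_fan Q = normal_fan P"
    and q: "q extreme_point_of Q"
  shows "\<exists>x. x extreme_point_of P \<and> sig P Q x = q"
proof -
  obtain x where x: "x extreme_point_of P" "normal_cone P {x} = normal_cone Q {q}"
    using sigma_exists[OF Q P fan[symmetric] q] by blast
  have "sig P Q x = q"
    using cone_unique[OF Q _ q] sig[OF P Q fan x(1)] x(2) by auto
  then show ?thesis using x(1) by blast
qed

definition expo :: "'a::euclidean_space set \<Rightarrow> 'a \<Rightarrow> 'a \<Rightarrow> bool" where
  "expo P x y \<longleftrightarrow> (\<exists>a b. P \<subseteq> {z. a \<bullet> z \<le> b} \<and> a \<bullet> x = b \<and> a \<bullet> y = b \<and>
      (\<forall>v. v extreme_point_of P \<and> v \<noteq> x \<and> v \<noteq> y \<longrightarrow> a \<bullet> v < b))"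

lemma expo_face:
  fixes P :: "'a::euclidean_space set"
  assumes P: "polytope P" and F: "convex hull {x, y} face_of P"
  shows "expo P x y"
proof -
  have "convex hull {x, y} exposed_face_of P"
    using exposed_face_of_polyhedron[OF polytope_imp_polyhedron[OF P]] F by blast
  then obtain a b where ab: "P \<subseteq> {z. a \<bullet> z \<le> b}" "convex hull {x, y} = P \<inter> {z. a \<bullet> z = b}"
    unfolding exposed_face_of_def by blast
  have xy: "x \<in> convex hull {x, y}" "y \<in> convex hull {x, y}" by (simp_all add: hull_inc)
  have "a \<bullet> v < b" if v: "v extreme_point_of P" "v \<noteq> x" "v \<noteq> y" for v
  proof (rule ccontr)
    assume "\<not> a \<bullet> v < b"
    moreover have "a \<bullet> v \<le> b" using ab(1) ext_in[OF v(1)] by blast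
    ultimately have "v \<in> convex hull {x, y}" using ab(2) ext_in[OF v(1)] by auto
    then have "v extreme_point_of convex hull {x, y}" using extreme_point_of_face[OF F] v(1) by blast
    then have "v \<in> {x, y}" by (rule extreme_point_of_convex_hull)
    then show False using v by auto
  qed
  then show ?thesis unfolding expo_def using ab xy
    by (intro exI[of _ a] exI[of _ b]) auto
qed

lemma edge_parallel:
  fixes P Q :: "'a::euclidean_space set"
  assumes P: "polytope P" and Q: "polytope Q" and fan: "normal_fan Q = normal_fan P"
    and x: "x extreme_point_of P" and y: "y extreme_point_of P" and xy: "x \<noteq> y"
    and ex: "expo P x y"
  shows "\<exists>m>0. sig P Q y - sig P Q x = m *\<^sub>R (y - x)"
proof -
  obtain a b where ab: "P \<subseteq> {z. a \<bullet> z \<le> b}" "a \<bullet> x = b" "a \<bullet> y = b"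
      "\<forall>v. v extreme_point_of P \<and> v \<noteq> x \<and> v \<noteq> y \<longrightarrow> a \<bullet> v < b"
    using ex unfolding expo_def by blast
  let ?V = "{v. v extreme_point_of P}"
  have V: "finite ?V" "P = convex hull ?V" using polytope_ext[OF P] by auto
  have WV: "{x, y} \<subseteq> ?V" using x y by auto
  have lt: "\<forall>v\<in>?V-{x,y}. a \<bullet> v < a \<bullet> x" "\<forall>v\<in>?V-{x,y}. a \<bullet> v < a \<bullet> y"
    using ab by auto
  obtain e1 where e1: "e1 > 0" "\<forall>z. norm z < e1 \<longrightarrow> (\<forall>w\<in>{x,y}. z \<bullet> w = z \<bullet> x) \<longrightarrow> a + z \<in> normal_cone (convex hull ?V) {x}"
    using perturb[OF V(1) _ WV, of x a] lt(1) ab by auto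
  obtain e2 where e2: "e2 > 0" "\<forall>z. norm z < e2 \<longrightarrow> (\<forall>w\<in>{x,y}. z \<bullet> w = z \<bullet> y) \<longrightarrow> a + z \<in> normal_cone (convex hull ?V) {y}"
    using perturb[OF V(1) _ WV, of y a] lt(2) ab by auto
  define sx where "sx = sig P Q x"
  define sy where "sy = sig P Q y"
  have sx: "sx extreme_point_of Q" "normal_cone Q {sx} = normal_cone P {x}"
    using sig[OF P Q fan x] unfolding sx_def by auto
  have sy: "sy extreme_point_of Q" "normal_cone Q {sy} = normal_cone P {y}"
    using sig[OF P Q fan y] unfolding sy_def by auto
  have sxQ: "sx \<in> Q" and syQ: "sy \<in> Q" using ext_in sx(1) sy(1) by auto
  have key: "(a + z) \<bullet> sx = (a + z) \<bullet> sy" if "norm z < min e1 e2" "z \<bullet> (y - x) = 0" for z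
  proof -
    have zz: "z \<bullet> y = z \<bullet> x" using that(2) by (simp add: inner_diff_right)
    have "a + z \<in> normal_cone P {x}" using e1(2) that(1) zz V(2)[symmetric] by auto
    then have h1: "a + z \<in> normal_cone Q {sx}" using sx(2) by simp
    have "a + z \<in> normal_cone P {y}" using e2(2) that(1) zz V(2)[symmetric] by auto
    then have h2: "a + z \<in> normal_cone Q {sy}" using sy(2) by simp
    have "(a + z) \<bullet> sy \<le> (a + z) \<bullet> sx" using h1 syQ by (simp add: normal_cone_def)
    moreover have "(a + z) \<bullet> sx \<le> (a + z) \<bullet> sy" using h2 sxQ by (simp add: normal_cone_def)
    ultimately show ?thesis by simp
  qed
  have emin: "min e1 e2 > 0" using e1 e2 by simp
  have k0: "a \<bullet> sx = a \<bullet> sy" using key[of 0] emin by simp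
  have "\<forall>z. norm z < min e1 e2 \<longrightarrow> z \<bullet> (y - x) = 0 \<longrightarrow> z \<bullet> (sy - sx) = 0"
    using key k0 by (simp add: inner_add_left inner_diff_right)
  moreover have "y - x \<noteq> 0" using xy by simp
  ultimately obtain m where m: "sy - sx = m *\<^sub>R (y - x)"
    using parallel_lemma[OF emin] by blast
  obtain d where d: "\<forall>z\<in>P. z \<noteq> x \<longrightarrow> d \<bullet> z < d \<bullet> x" using exposed_vertex[OF P x] by blast
  have "d \<in> normal_cone P {x}" using d by (force simp: normal_cone_def)
  then have "d \<in> normal_cone Q {sx}" using sx(2) by simp
  then have "d \<bullet> sy \<le> d \<bullet> sx" using syQ by (simp add: normal_cone_def)
  then have "m * (d \<bullet> (y - x)) \<le> 0" using m
    by (metis diff_le_0_iff_le inner_diff_right inner_scaleR_right)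
  moreover have "d \<bullet> (y - x) < 0" using d ext_in[OF y] xy by (simp add: inner_diff_right)
  ultimately have m0: "m \<ge> 0" by (simp add: mult_le_0_iff)
  have "m \<noteq> 0"
  proof
    assume "m = 0"
    then have "sx = sy" using m by simp
    then have "normal_cone P {x} = normal_cone P {y}" using sx(2) sy(2) by simp
    then show False using cone_unique[OF P x y] xy by simp
  qed
  then show ?thesis using m m0 unfolding sx_def sy_def by (intro exI[of _ m]) auto
qed

lemma aff_indep_pair:
  fixes C :: "'a::euclidean_space set"
  assumes C: "\<not> affine_dependent C" and in_C: "x0 \<in> C" "y \<in> C" "z \<in> C"
    and dist: "x0 \<noteq> y" "x0 \<noteq> z" "y \<noteq> z"
    and eq: "al *\<^sub>R (z - x0) = be *\<^sub>R (y - x0)"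
  shows "al = 0 \<and> be = 0"
proof -
  have al: "al = 0"
  proof (rule ccontr)
    assume al: "al \<noteq> 0"
    have "z = (1 - be / al) *\<^sub>R x0 + (be / al) *\<^sub>R y"
    proof -
      have "(1 / al) *\<^sub>R (al *\<^sub>R (z - x0)) = (1 / al) *\<^sub>R (be *\<^sub>R (y - x0))" using eq by simp
      then have "z - x0 = (be / al) *\<^sub>R (y - x0)" using al by simp
      then show ?thesis by (simp add: algebra_simps)
    qed
    then have "z \<in> {u *\<^sub>R x0 + v *\<^sub>R y| u v. u + v = 1}" by (intro CollectI exI[of _ "1 - be / al"] exI[of _ "be / al"]) simp
    then have "z \<in> affine hull {x0, y}" unfolding affine_hull_2 .
    moreover have "affine hull {x0, y} \<subseteq> affine hull (C - {z})"
      by (rule hull_mono) (use in_C dist in auto)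
    ultimately have "z \<in> affine hull (C - {z})" by blast
    then show False using C in_C unfolding affine_dependent_def by blast
  qed
  then have "be *\<^sub>R (y - x0) = 0" using eq by simp
  then show ?thesis using al dist by simp
qed

lemma facet_linear:
  fixes P Q :: "'a::euclidean_space set"
  assumes P: "polytope P" and Q: "polytope Q" and fan: "normal_fan Q = normal_fan P"
    and CE: "C \<subseteq> {v. v extreme_point_of P}" and C: "\<not> affine_dependent C"
    and ex: "\<forall>x\<in>C. \<forall>y\<in>C. x \<noteq> y \<longrightarrow> expo P x y" and x0: "x0 \<in> C"
  shows "\<exists>l>0. \<forall>y\<in>C. sig P Q y = sig P Q x0 + l *\<^sub>R (y - x0)"
proof -
  have ep: "\<exists>m>0. sig P Q b - sig P Q a = m *\<^sub>R (b - a)" if "a \<in> C" "b \<in> C" "a \<noteq> b" for a b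
  proof -
    have "a extreme_point_of P" "b extreme_point_of P" using CE that by auto
    moreover have "expo P a b" using ex that by blast
    ultimately show ?thesis using edge_parallel[OF P Q fan] that(3) by blast
  qed
  have "\<forall>y\<in>C-{x0}. \<exists>m>0. sig P Q y - sig P Q x0 = m *\<^sub>R (y - x0)"
    using ep x0 by blast
  then have "\<exists>m. \<forall>y\<in>C-{x0}. m y > 0 \<and> sig P Q y - sig P Q x0 = m y *\<^sub>R (y - x0)"
    by (rule bchoice)
  then obtain m where m: "\<forall>y\<in>C-{x0}. m y > 0 \<and> sig P Q y - sig P Q x0 = m y *\<^sub>R (y - x0)"
    by blast
  have same: "m y = m z" if yz: "y \<in> C-{x0}" "z \<in> C-{x0}" "y \<noteq> z" for y z
  proof -
    obtain nu where nu: "sig P Q z - sig P Q y = nu *\<^sub>R (z - y)"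
      using ep[of y z] yz by blast
    have "sig P Q z - sig P Q y = (sig P Q z - sig P Q x0) - (sig P Q y - sig P Q x0)" by simp
    also have "\<dots> = m z *\<^sub>R (z - x0) - m y *\<^sub>R (y - x0)" using m yz by simp
    finally have "m z *\<^sub>R (z - x0) - m y *\<^sub>R (y - x0) = nu *\<^sub>R ((z - x0) - (y - x0))"
      using nu by simp
    then have "(m z - nu) *\<^sub>R (z - x0) = (m y - nu) *\<^sub>R (y - x0)"
      by (simp add: algebra_simps)
    moreover have "y \<in> C" "z \<in> C" "x0 \<noteq> y" "x0 \<noteq> z" using yz by auto
    ultimately have "m z - nu = 0 \<and> m y - nu = 0"
      using aff_indep_pair[OF C x0, of y z "m z - nu" "m y - nu"] yz(3) by blast
    then show ?thesis by simp
  qed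
  show ?thesis
  proof (cases "C - {x0} = {}")
    case True
    then show ?thesis using x0 by (intro exI[of _ 1]) auto
  next
    case False
    then obtain y1 where y1: "y1 \<in> C - {x0}" by blast
    have "\<forall>y\<in>C. sig P Q y = sig P Q x0 + m y1 *\<^sub>R (y - x0)"
    proof
      fix y assume y: "y \<in> C"
      show "sig P Q y = sig P Q x0 + m y1 *\<^sub>R (y - x0)"
      proof (cases "y = x0")
        case True then show ?thesis by simp
      next
        case False
        then have "m y = m y1" using same[of y y1] y y1 by (cases "y = y1") auto
        moreover have "sig P Q y - sig P Q x0 = m y *\<^sub>R (y - x0)" using m y False by blast
        ultimately have h: "sig P Q y - sig P Q x0 = m y1 *\<^sub>R (y - x0)" by simp
        have "sig P Q y = sig P Q x0 + (sig P Q y - sig P Q x0)" by simp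
        also have "\<dots> = sig P Q x0 + m y1 *\<^sub>R (y - x0)" by (simp only: h)
        finally show ?thesis .
      qed
    qed
    then show ?thesis using m y1 by blast
  qed
qed

lemma pair_face:
  fixes P :: "'a::euclidean_space set"
  assumes F: "F face_of P" and C: "\<not> affine_dependent C" and FC: "F = convex hull C"
    and x: "x \<in> C" and y: "y \<in> C"
  shows "convex hull {x, y} face_of P"
proof -
  have "\<exists>c. c \<subseteq> C \<and> convex hull {x, y} = convex hull c"
    by (rule exI[of _ "{x, y}"]) (use x y in auto)
  then have "convex hull {x, y} face_of convex hull C"
    using face_of_convex_hull_affine_independent[OF C] by (rule iffD2[rotated])
  then show ?thesis using F FC face_of_trans by blast
qed

lemma facet_simplex:
  fixes P :: "'a::euclidean_space set"
  assumes S: "simplicial_polytope P" and dimP: "aff_dim P = int DIM('a)" and F: "F facet_of P"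
  shows "\<exists>C. finite C \<and> \<not> affine_dependent C \<and> int (card C) = int DIM('a) \<and> F = convex hull C
     \<and> C \<subseteq> {v. v extreme_point_of P} \<and> (\<forall>x\<in>C. \<forall>y\<in>C. x \<noteq> y \<longrightarrow> expo P x y)"
proof -
  have P: "polytope P" using S unfolding simplicial_polytope_def by blast
  obtain n where n: "n simplex F" using S F unfolding simplicial_polytope_def by blast
  then obtain C where C: "finite C" "\<not> affine_dependent C" "int (card C) = n + 1" "F = convex hull C"
    unfolding simplex by blast
  have "aff_dim F = n" using aff_dim_simplex[OF n] .
  moreover have "aff_dim F = aff_dim P - 1" using F unfolding facet_of_def by blast
  ultimately have card: "int (card C) = int DIM('a)" using C(3) dimP by simp
  have Fface: "F face_of P" using F facet_of_imp_face_of by blast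
  have CE: "C \<subseteq> {v. v extreme_point_of P}"
  proof
    fix x assume x: "x \<in> C"
    then have "x extreme_point_of F"
      using extreme_point_of_convex_hull_affine_independent[OF C(2)] C(4) by simp
    then show "x \<in> {v. v extreme_point_of P}" using extreme_point_of_face[OF Fface] by simp
  qed
  have ex: "\<forall>x\<in>C. \<forall>y\<in>C. x \<noteq> y \<longrightarrow> expo P x y"
  proof (intro ballI impI)
    fix x y assume "x \<in> C" "y \<in> C" "x \<noteq> y"
    then show "expo P x y" using expo_face[OF P pair_face[OF Fface C(2) C(4)]] by blast
  qed
  show ?thesis
    apply (rule exI[of _ C])
    using C(1,2,4) card CE ex by blast
qed

lemma vertex_data:
  fixes P :: "'a::euclidean_space set"
  assumes S: "simplicial_polytope P" and dimP: "aff_dim P = int DIM('a)" and d3: "DIM('a) \<ge> 3"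
    and p: "p extreme_point_of P"
  shows "\<exists>C C'. C \<subseteq> {v. v extreme_point_of P} \<and> C' \<subseteq> {v. v extreme_point_of P}
     \<and> \<not> affine_dependent C \<and> \<not> affine_dependent C'
     \<and> (\<forall>x\<in>C. \<forall>y\<in>C. x \<noteq> y \<longrightarrow> expo P x y) \<and> (\<forall>x\<in>C'. \<forall>y\<in>C'. x \<noteq> y \<longrightarrow> expo P x y)
     \<and> p \<in> C \<and> p \<in> C' \<and> (\<exists>pj. pj \<in> C \<and> pj \<in> C' \<and> pj \<noteq> p)
     \<and> affine hull (C \<union> C') = UNIV"
proof -
  have P: "polytope P" using S unfolding simplicial_polytope_def by blast
  have polyh: "polyhedron P" using polytope_imp_polyhedron[OF P] .
  have pface: "{p} face_of P" using p face_of_singleton by blast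
  have "{p} \<noteq> P"
  proof
    assume "{p} = P"
    then have "aff_dim P = 0" by auto
    then show False using dimP d3 by simp
  qed
  then obtain F where F: "F facet_of P" "{p} \<subseteq> F"
    using face_of_polyhedron_subset_facet[OF polyh pface] by blast
  obtain C where C: "finite C" "\<not> affine_dependent C" "int (card C) = int DIM('a)" "F = convex hull C"
     "C \<subseteq> {v. v extreme_point_of P}" "\<forall>x\<in>C. \<forall>y\<in>C. x \<noteq> y \<longrightarrow> expo P x y"
    using facet_simplex[OF S dimP F(1)] by blast
  have Fface: "F face_of P" using F(1) facet_of_imp_face_of by blast
  have inC: "v \<in> C" if "v extreme_point_of P" "v \<in> F" for v
  proof -
    have "v extreme_point_of F" using extreme_point_of_face[OF Fface] that by blast
    then show ?thesis using extreme_point_of_convex_hull_affine_independent[OF C(2)] C(4) by simp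
  qed
  have pC: "p \<in> C" using inC p F(2) by blast
  have "\<not> C \<subseteq> {p}"
  proof
    assume "C \<subseteq> {p}"
    then have "card C \<le> card {p}" by (intro card_mono) auto
    then have "card C \<le> 1" by simp
    then show False using C(3) d3 by simp
  qed
  then obtain pj where pj: "pj \<in> C" "pj \<noteq> p" by blast
  define e where "e = convex hull {p, pj}"
  have eface: "e face_of P" unfolding e_def using pair_face[OF Fface C(2) C(4) pC pj(1)] .
  have ene: "e \<noteq> {}" unfolding e_def by simp
  have affe: "aff_dim e \<le> 1"
  proof -
    have "aff_dim e = aff_dim {p, pj}" unfolding e_def by (simp add: aff_dim_convex_hull)
    also have "\<dots> \<le> int (card {p, pj}) - 1" by (rule aff_dim_le_card) simp
    also have "\<dots> \<le> 1" by (cases "p = pj") auto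
    finally show ?thesis .
  qed
  have affF: "aff_dim F = int DIM('a) - 1" using F(1) dimP unfolding facet_of_def by simp
  have "e \<noteq> P" using affe dimP d3 by auto
  then have eint: "e = \<Inter>{G. G facet_of P \<and> e \<subseteq> G}" using face_of_polyhedron[OF polyh eface ene] by blast
  have eF: "e \<subseteq> F" unfolding e_def using C(4) pC pj(1) by (simp add: hull_mono)
  obtain G where G: "G facet_of P" "e \<subseteq> G" "G \<noteq> F"
  proof (rule ccontr)
    assume "\<not> thesis"
    then have "\<forall>G. G facet_of P \<and> e \<subseteq> G \<longrightarrow> G = F" using that by blast
    then have "{G. G facet_of P \<and> e \<subseteq> G} = {F}" using F(1) eF by blast
    then have "e = F" using eint by simp
    then show False using affe affF d3 by simp
  qed
  obtain C' where C': "finite C'" "\<not> affine_dependent C'" "int (card C') = int DIM('a)" "G = convex hull C'"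
     "C' \<subseteq> {v. v extreme_point_of P}" "\<forall>x\<in>C'. \<forall>y\<in>C'. x \<noteq> y \<longrightarrow> expo P x y"
    using facet_simplex[OF S dimP G(1)] by blast
  have Gface: "G face_of P" using G(1) facet_of_imp_face_of by blast
  have inC': "v \<in> C'" if "v extreme_point_of P" "v \<in> G" for v
  proof -
    have "v extreme_point_of G" using extreme_point_of_face[OF Gface] that by blast
    then show ?thesis using extreme_point_of_convex_hull_affine_independent[OF C'(2)] C'(4) by simp
  qed
  have "p \<in> e" "pj \<in> e" unfolding e_def by (simp_all add: hull_inc)
  moreover have "pj extreme_point_of P" using pj(1) C(5) by blast
  ultimately have pC': "p \<in> C'" "pj \<in> C'" using inC' p G(2) by blast+
  obtain z where z: "z \<in> C'" "z \<notin> affine hull C"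
  proof (rule ccontr)
    assume "\<not> thesis"
    then have sub: "C' \<subseteq> affine hull C" using that by blast
    have "F exposed_face_of P" using exposed_face_of_polyhedron[OF polyh] Fface by blast
    then obtain a b where ab: "P \<subseteq> {x. a \<bullet> x \<le> b}" "F = P \<inter> {x. a \<bullet> x = b}"
      unfolding exposed_face_of_def by blast
    have "C \<subseteq> F" using C(4) hull_subset[of C convex] by simp
    then have "C \<subseteq> {x. a \<bullet> x = b}" using ab(2) by blast
    then have "affine hull C \<subseteq> {x. a \<bullet> x = b}"
      using hull_minimal[of C "{x. a \<bullet> x = b}" affine] affine_hyperplane by blast
    moreover have "G \<subseteq> affine hull C"
    proof -
      have "G \<subseteq> affine hull C'" using C'(4) convex_hull_subset_affine_hull by blast
      also have "\<dots> \<subseteq> affine hull C" using hull_minimal[of C' "affine hull C" affine, OF sub affine_affine_hull[of C]] .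
      finally show ?thesis .
    qed
    moreover have "G \<subseteq> P" using G(1) facet_of_imp_subset by blast
    ultimately have GF: "G \<subseteq> F" using ab(2) by blast
    have "G face_of F" using face_of_subset[OF Gface GF] facet_of_imp_subset[OF F(1)] by blast
    then have "aff_dim G < aff_dim F"
      using face_of_aff_dim_lt[OF face_of_imp_convex[OF Fface]] G(3) by blast
    moreover have "aff_dim G = int DIM('a) - 1" using G(1) dimP unfolding facet_of_def by simp
    ultimately show False using affF by simp
  qed
  have "aff_dim C = int DIM('a) - 1" using aff_dim_affine_independent[OF C(2)] C(3) by simp
  then have "aff_dim (insert z C) = int DIM('a)" using aff_dim_insert[of z C] z(2) by simp
  then have "affine hull (insert z C) = UNIV" using aff_dim_eq_full[of "insert z C"] by simp
  moreover have "affine hull (insert z C) \<subseteq> affine hull (C \<union> C')"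
    by (rule hull_mono) (use z(1) in auto)
  ultimately have fin: "affine hull (C \<union> C') = UNIV" by blast
  have pjx: "\<exists>pj. pj \<in> C \<and> pj \<in> C' \<and> pj \<noteq> p" using pj pC' by blast
  show ?thesis
    apply (rule exI[of _ C], rule exI[of _ C'])
    using C(2,5,6) C'(2,5,6) pC pC' pjx fin by simp
qed

lemma orth_zero:
  fixes v :: "'a::euclidean_space"
  assumes D: "affine hull D = UNIV" and p: "p \<in> D" and o: "\<forall>y\<in>D. v \<bullet> (y - p) = 0"
  shows "v = 0"
proof -
  have "D \<subseteq> {x. v \<bullet> x = v \<bullet> p}" using o by (auto simp: inner_diff_right)
  then have "affine hull D \<subseteq> {x. v \<bullet> x = v \<bullet> p}"
    by (intro hull_minimal) (auto simp: affine_hyperplane)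
  then have "v \<bullet> (p + v) = v \<bullet> p" using D by auto
  then have "v \<bullet> v = 0" by (simp add: inner_add_right)
  then show ?thesis by simp
qed

lemma linear_on_union:
  fixes P Q :: "'a::euclidean_space set"
  assumes P: "polytope P" and Q: "polytope Q" and fan: "normal_fan Q = normal_fan P"
    and CE: "C \<subseteq> {v. v extreme_point_of P}" and C'E: "C' \<subseteq> {v. v extreme_point_of P}"
    and C: "\<not> affine_dependent C" and C': "\<not> affine_dependent C'"
    and ex: "\<forall>x\<in>C. \<forall>y\<in>C. x \<noteq> y \<longrightarrow> expo P x y" and ex': "\<forall>x\<in>C'. \<forall>y\<in>C'. x \<noteq> y \<longrightarrow> expo P x y"
    and p: "p \<in> C" "p \<in> C'" and pj: "pj \<in> C" "pj \<in> C'" "pj \<noteq> p"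
  shows "\<exists>l>0. \<forall>y\<in>C \<union> C'. sig P Q y = sig P Q p + l *\<^sub>R (y - p)"
proof -
  obtain l1 where l1: "l1 > 0" "\<forall>y\<in>C. sig P Q y = sig P Q p + l1 *\<^sub>R (y - p)"
    using facet_linear[OF P Q fan CE C ex p(1)] by blast
  obtain l2 where l2: "l2 > 0" "\<forall>y\<in>C'. sig P Q y = sig P Q p + l2 *\<^sub>R (y - p)"
    using facet_linear[OF P Q fan C'E C' ex' p(2)] by blast
  have "l1 *\<^sub>R (pj - p) = l2 *\<^sub>R (pj - p)" using l1(2) l2(2) pj by force
  then have "l1 = l2" using pj(3) by simp
  then show ?thesis using l1 l2 by auto
qed

lemma sup_scale:
  fixes f :: "'b \<Rightarrow> real"
  assumes k: "k > 0" and S: "S \<noteq> {}" and b: "bdd_above (f ` S)"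
  shows "(SUP y\<in>S. k * f y) = k * (SUP y\<in>S. f y)"
proof (rule antisym)
  show "(SUP y\<in>S. k * f y) \<le> k * (SUP y\<in>S. f y)"
    using S b k by (intro cSUP_least) (auto intro: cSUP_upper)
next
  have b2: "bdd_above ((\<lambda>y. k * f y) ` S)"
  proof -
    obtain B where "\<forall>y\<in>S. f y \<le> B" using b by (auto simp: bdd_above_def)
    then have "\<forall>y\<in>S. k * f y \<le> k * B" using k by simp
    then show ?thesis by (auto simp: bdd_above_def)
  qed
  have "(SUP y\<in>S. f y) \<le> (SUP y\<in>S. k * f y) / k"
  proof (rule cSUP_least[OF S])
    fix y assume "y \<in> S"
    then have "k * f y \<le> (SUP y\<in>S. k * f y)" using b2 by (intro cSUP_upper)
    then show "f y \<le> (SUP y\<in>S. k * f y) / k" using k by (simp add: field_simps)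
  qed
  then show "k * (SUP y\<in>S. f y) \<le> (SUP y\<in>S. k * f y)" using k by (simp add: field_simps)
qed

lemma vertex_scale:
  fixes P Q Q0 :: "'a::euclidean_space set"
  assumes S: "simplicial_polytope P" and dimP: "aff_dim P = int DIM('a)" and d3: "DIM('a) \<ge> 3"
    and Q: "polytope Q" and fan: "normal_fan Q = normal_fan P"
    and Q0: "polytope Q0" and fan0: "normal_fan Q0 = normal_fan P"
    and r: "\<forall>v. v extreme_point_of Q \<longrightarrow> norm v = r"
    and r0: "\<forall>v. v extreme_point_of Q0 \<longrightarrow> norm v = r0"
    and p: "p extreme_point_of P"
  shows "r0 \<noteq> 0 \<and> r / r0 > 0 \<and> sig P Q p = (r / r0) *\<^sub>R sig P Q0 p"
proof -
  have P: "polytope P" using S unfolding simplicial_polytope_def by blast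
  obtain C C' pj where D: "C \<subseteq> {v. v extreme_point_of P}" "C' \<subseteq> {v. v extreme_point_of P}"
     "\<not> affine_dependent C" "\<not> affine_dependent C'"
     "\<forall>x\<in>C. \<forall>y\<in>C. x \<noteq> y \<longrightarrow> expo P x y" "\<forall>x\<in>C'. \<forall>y\<in>C'. x \<noteq> y \<longrightarrow> expo P x y"
     "p \<in> C" "p \<in> C'" "pj \<in> C" "pj \<in> C'" "pj \<noteq> p"
     "affine hull (C \<union> C') = UNIV"
    using vertex_data[OF S dimP d3 p] by blast
  obtain l where l: "l > 0" "\<forall>y\<in>C \<union> C'. sig P Q y = sig P Q p + l *\<^sub>R (y - p)"
    using linear_on_union[OF P Q fan D(1-11)] by blast
  obtain l0 where l0: "l0 > 0" "\<forall>y\<in>C \<union> C'. sig P Q0 y = sig P Q0 p + l0 *\<^sub>R (y - p)"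
    using linear_on_union[OF P Q0 fan0 D(1-11)] by blast
  define a where "a = sig P Q p"
  define a0 where "a0 = sig P Q0 p"
  define al where "al = l / l0"
  have al: "al > 0" using l l0 by (simp add: al_def)
  have nQ: "norm (sig P Q y) = r" if "y extreme_point_of P" for y
    using sig[OF P Q fan that] r by blast
  have nQ0: "norm (sig P Q0 y) = r0" if "y extreme_point_of P" for y
    using sig[OF P Q0 fan0 that] r0 by blast
  have orth: "(a - al *\<^sub>R a0) \<bullet> (y - p) = 0" if y: "y \<in> C \<union> C'" for y
  proof -
    define w where "w = y - p"
    have ye: "y extreme_point_of P" using y D(1,2) by blast
    have "norm (a + l *\<^sub>R w) = norm a"
      using nQ[OF ye] nQ[OF p] l(2) y unfolding a_def w_def by simp
    then have "(a + l *\<^sub>R w) \<bullet> (a + l *\<^sub>R w) = a \<bullet> a"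
      by (metis power2_norm_eq_inner)
    then have "2 * l * (a \<bullet> w) + l * l * (w \<bullet> w) = 0"
      by (simp add: inner_add_left inner_add_right inner_commute algebra_simps)
    then have "l * (2 * (a \<bullet> w) + l * (w \<bullet> w)) = 0" by (simp add: algebra_simps)
    then have "2 * (a \<bullet> w) + l * (w \<bullet> w) = 0" using l(1) by simp
    then have e1: "2 * (a \<bullet> w) = - l * (w \<bullet> w)" by simp
    have "norm (a0 + l0 *\<^sub>R w) = norm a0"
      using nQ0[OF ye] nQ0[OF p] l0(2) y unfolding a0_def w_def by simp
    then have "(a0 + l0 *\<^sub>R w) \<bullet> (a0 + l0 *\<^sub>R w) = a0 \<bullet> a0"
      by (metis power2_norm_eq_inner)
    then have "2 * l0 * (a0 \<bullet> w) + l0 * l0 * (w \<bullet> w) = 0"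
      by (simp add: inner_add_left inner_add_right inner_commute algebra_simps)
    then have "l0 * (2 * (a0 \<bullet> w) + l0 * (w \<bullet> w)) = 0" by (simp add: algebra_simps)
    then have "2 * (a0 \<bullet> w) + l0 * (w \<bullet> w) = 0" using l0(1) by simp
    then have e2: "2 * (a0 \<bullet> w) = - l0 * (w \<bullet> w)" by simp
    have "2 * ((a - al *\<^sub>R a0) \<bullet> w) = 2 * (a \<bullet> w) - al * (2 * (a0 \<bullet> w))"
      by (simp add: inner_diff_left algebra_simps)
    also have "\<dots> = - l * (w \<bullet> w) + al * l0 * (w \<bullet> w)" using e1 e2 by simp
    also have "\<dots> = 0" using l0(1) by (simp add: al_def)
    finally show ?thesis unfolding w_def by simp
  qed
  have aeq: "a = al *\<^sub>R a0"
    using orth_zero[OF D(12), of p "a - al *\<^sub>R a0"] orth D(7) by auto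
  have pjE: "pj extreme_point_of P" using D(9,1) by blast
  have r0ne: "r0 \<noteq> 0"
  proof
    assume "r0 = 0"
    then have "sig P Q0 pj = 0" "sig P Q0 p = 0" using nQ0[OF pjE] nQ0[OF p] by auto
    then have "l0 *\<^sub>R (pj - p) = 0" using l0(2) D(9) by force
    then show False using l0(1) D(11) by simp
  qed
  have "r = al * r0" using nQ[OF p] nQ0[OF p] aeq al unfolding a_def a0_def by simp
  then have "al = r / r0" using r0ne by simp
  then show ?thesis using aeq al r0ne unfolding a_def a0_def by simp
qed

lemma main_pair:
  fixes P Q Q0 :: "'a::euclidean_space set"
  assumes S: "simplicial_polytope P" and dimP: "aff_dim P = int DIM('a)" and d3: "DIM('a) \<ge> 3"
    and QI: "Q \<in> InCone P" and Q0I: "Q0 \<in> InCone P"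
  shows "\<exists>t::real. support_fun Q = (\<lambda>u. t * support_fun Q0 u)"
proof -
  have P: "polytope P" using S unfolding simplicial_polytope_def by blast
  have Q: "polytope Q" and fan: "normal_fan Q = normal_fan P" and "inscribed_origin Q"
    using QI unfolding InCone_def by auto
  then obtain r where r: "\<forall>v. v extreme_point_of Q \<longrightarrow> norm v = r" unfolding inscribed_origin_def by blast
  have Q0: "polytope Q0" and fan0: "normal_fan Q0 = normal_fan P" and "inscribed_origin Q0"
    using Q0I unfolding InCone_def by auto
  then obtain r0 where r0: "\<forall>v. v extreme_point_of Q0 \<longrightarrow> norm v = r0" unfolding inscribed_origin_def by blast
  have "P \<noteq> {}" using dimP aff_dim_empty[of P] by auto
  then obtain p1 where p1: "p1 extreme_point_of P"
    using extreme_point_exists_convex[OF polytope_imp_compact[OF P] polytope_imp_convex[OF P]] by blast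
  define k where "k = r / r0"
  have k: "k > 0" using vertex_scale[OF S dimP d3 Q fan Q0 fan0 r r0 p1] unfolding k_def by blast
  have scale: "sig P Q p = k *\<^sub>R sig P Q0 p" if "p extreme_point_of P" for p
    using vertex_scale[OF S dimP d3 Q fan Q0 fan0 r r0 that] unfolding k_def by blast
  have extQ: "{v. v extreme_point_of Q} = sig P Q ` {p. p extreme_point_of P}"
    using sig[OF P Q fan] sig_surj[OF P Q fan] by blast
  have extQ0: "{v. v extreme_point_of Q0} = sig P Q0 ` {p. p extreme_point_of P}"
    using sig[OF P Q0 fan0] sig_surj[OF P Q0 fan0] by blast
  have "{v. v extreme_point_of Q} = (\<lambda>x. k *\<^sub>R x) ` {v. v extreme_point_of Q0}"
    unfolding extQ extQ0 image_image using scale by (auto simp: image_iff)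
  then have QQ0: "Q = (\<lambda>x. k *\<^sub>R x) ` Q0"
    using polytope_ext[OF Q] polytope_ext[OF Q0] convex_hull_scaling[of k "{v. v extreme_point_of Q0}"] by simp
  have Q0ne: "Q0 \<noteq> {}" using sig[OF P Q0 fan0 p1] ext_in by blast
  obtain B where B: "\<forall>y\<in>Q0. norm y \<le> B" using polytope_imp_bounded[OF Q0] bounded_iff by blast
  have "support_fun Q u = k * support_fun Q0 u" for u
  proof -
    have bd: "bdd_above ((\<lambda>y. u \<bullet> y) ` Q0)"
    proof -
      have "\<forall>y\<in>Q0. u \<bullet> y \<le> norm u * B"
      proof
        fix y assume "y \<in> Q0"
        then have "norm u * norm y \<le> norm u * B" using B by (simp add: mult_left_mono)
        then show "u \<bullet> y \<le> norm u * B" using norm_cauchy_schwarz[of u y] by linarith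
      qed
      then show ?thesis by (auto simp: bdd_above_def)
    qed
    have "support_fun Q u = (SUP y\<in>Q0. k * (u \<bullet> y))"
      unfolding support_fun_def QQ0 image_image by simp
    also have "\<dots> = k * (SUP y\<in>Q0. u \<bullet> y)" by (rule sup_scale[OF k Q0ne bd])
    finally show ?thesis unfolding support_fun_def by simp
  qed
  then show ?thesis by blast
qed

theorem corollary4p9:
  fixes P :: "'a::euclidean_space set"
  assumes "simplicial_polytope P"
    and "aff_dim P = int DIM('a)"
    and "DIM('a) \<ge> 3"
  shows "span_dim_le_one (support_fun ` InCone P)"
proof (cases "InCone P = {}")
  case True
  then show ?thesis unfolding span_dim_le_one_def by simp
next
  case False
  then obtain Q0 where Q0: "Q0 \<in> InCone P" by blast
  show ?thesis unfolding span_dim_le_one_def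
    using main_pair[OF assms _ Q0] by (intro exI[of _ "support_fun Q0"]) blast
qed

end
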